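(* Let $A=B^\top B+E$ where $B\in\mathbb{R}^{n\times d}$, $E\in\mathbb{R}^{d\times d}$ is symmetric with $\max_{i,j}|E_{ij}|\le a$, and $B^\top B$ has a $k$-sparse unit eigenvector $v$ corresponding to its largest eigenvalue $\lambda_1=\lambda_1(B^\top B)$. Let $\lambda_2=\lambda_2(B^\top B)$ be the second largest eigenvalue and assume $\lambda_1-\lambda_2>0$. Let $W^*$ be an optimal solution to $\max\,\mathrm{tr}(AW)$ s.t. $\mathrm{tr}(W)=1$, $\sum_{i,j}|W_{ij}|\le k$, $W\succeq0$. Then $$\|W^*-vv^\top\|_F\le\frac{2ak}{\lambda_1-\lambda_2}+\sqrt{\frac{2ak}{\lambda_1-\lambda_2}}.$$
   Context: A vector is $k$-sparse if it has at most $k$ nonzero entries; $\|\cdot\|_F$ is the Frobenius norm. *)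

theory Defs
  imports "HOL-Analysis.Analysis"
begin

definition is_eigenvalue :: "real^'d^'d \<Rightarrow> real \<Rightarrow> bool" where
  "is_eigenvalue M \<mu> \<longleftrightarrow> (\<exists>x. x \<noteq> 0 \<and> M *v x = \<mu> *\<^sub>R x)"

text \<open>Multiplicity of an eigenvalue (dimension of the eigenspace; for the symmetric
  matrices considered here it coincides with the algebraic multiplicity).\<close>
definition eig_mult :: "real^'d^'d \<Rightarrow> real \<Rightarrow> nat" where
  "eig_mult M \<mu> = dim {x. M *v x = \<mu> *\<^sub>R x}"

definition lambda1 :: "real^'d^'d \<Rightarrow> real" where
  "lambda1 M = Max {\<mu>. is_eigenvalue M \<mu>}"

text \<open>Second largest eigenvalue, counted with multiplicity.\<close>
definition lambda2 :: "real^'d^'d \<Rightarrow> real" where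
  "lambda2 M = (if eig_mult M (lambda1 M) \<ge> 2 then lambda1 M
               else Max {\<mu>. is_eigenvalue M \<mu> \<and> \<mu> < lambda1 M})"

definition symmetric_mat :: "real^'d^'d \<Rightarrow> bool" where
  "symmetric_mat M \<longleftrightarrow> transpose M = M"

definition psd :: "real^'d^'d \<Rightarrow> bool" where
  "psd W \<longleftrightarrow> symmetric_mat W \<and> (\<forall>x. 0 \<le> x \<bullet> (W *v x))"

definition k_sparse :: "nat \<Rightarrow> real^'d \<Rightarrow> bool" where
  "k_sparse k v \<longleftrightarrow> card {i. v $ i \<noteq> 0} \<le> k"

definition frob_norm :: "real^'m^'n \<Rightarrow> real" where
  "frob_norm M = sqrt (\<Sum>i\<in>UNIV. \<Sum>j\<in>UNIV. (M $ i $ j)\<^sup>2)"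

definition outer :: "real^'d \<Rightarrow> real^'d^'d" where
  "outer v = (\<chi> i j. v $ i * v $ j)"

definition sdp_feasible :: "nat \<Rightarrow> real^'d^'d \<Rightarrow> bool" where
  "sdp_feasible k W \<longleftrightarrow> trace W = 1 \<and> (\<Sum>i\<in>UNIV. \<Sum>j\<in>UNIV. \<bar>W $ i $ j\<bar>) \<le> real k \<and> psd W"

end

theory Submission
  imports Defs
begin

lemma sym_inner:
  fixes M :: "real^'d^'d"
  assumes "transpose M = M"
  shows "(M *v x) \<bullet> y = x \<bullet> (M *v y)"
proof -
  have "M *v x = x v* transpose M"
    by (simp add: transpose_def vector_matrix_mult_def matrix_vector_mult_def vec_eq_iff mult.commute)
  then show ?thesis using assms dot_lmul_matrix by metis
qed

lemma quad_nonneg_zero: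
  fixes c d :: real
  assumes "\<And>e. 0 \<le> 2*e*c + e^2 * d" "d \<ge> 0"
  shows "c = 0"
proof (rule ccontr)
  assume "c \<noteq> 0"
  define e where "e = - c / (d+1)"
  have dp: "d + 1 > 0" using assms(2) by simp
  have c2: "c^2 > 0" using `c \<noteq> 0` by simp
  have "e^2 * d \<le> e^2 * (d+1)" by (simp add: mult_left_mono)
  also have "e^2 * (d+1) = c^2 / (d+1)" using dp by (simp add: e_def power2_eq_square)
  finally have 1: "e^2 * d \<le> c^2 / (d+1)" .
  have 2: "2*e*c = - 2 * (c^2 / (d+1))" by (simp add: e_def power2_eq_square)
  have "c^2 / (d+1) > 0" using dp c2 by simp
  then have "2*e*c + e^2 * d < 0" using 1 2 by linarith
  with assms(1)[of e] show False by simp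
qed

lemma var_eigvec:
  fixes M :: "real^'d^'d"
  assumes sym: "transpose M = M" and S: "subspace S"
    and inv: "\<And>x. x \<in> S \<Longrightarrow> M *v x \<in> S" and nz: "x1 \<in> S" "x1 \<noteq> 0"
  shows "\<exists>x0\<in>S. norm x0 = 1 \<and> M *v x0 = (x0 \<bullet> (M *v x0)) *\<^sub>R x0
           \<and> (\<forall>y\<in>S. y \<bullet> (M *v y) \<le> (x0 \<bullet> (M *v x0)) * (y \<bullet> y))"
proof -
  let ?K = "S \<inter> sphere 0 1"
  let ?q = "\<lambda>x. x \<bullet> (M *v x)"
  have c1: "compact ?K"
    by (intro closed_Int_compact closed_subspace S compact_sphere)
  moreover have "(1/norm x1) *\<^sub>R x1 \<in> ?K"
  proof
    show "(1/norm x1) *\<^sub>R x1 \<in> S" using nz S by (simp add: subspace_scale)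
    show "(1/norm x1) *\<^sub>R x1 \<in> sphere 0 1" using nz by simp
  qed
  hence c2: "?K \<noteq> {}" by blast
  have c3: "continuous_on ?K ?q"
    by (intro continuous_on_inner continuous_on_id linear_continuous_on matrix_vector_mul_bounded_linear)
  from continuous_attains_sup[OF c1 c2 c3]
  obtain x0 where x0: "x0 \<in> ?K" "\<And>y. y \<in> ?K \<Longrightarrow> ?q y \<le> ?q x0"
    by blast
  define mu where "mu = ?q x0"
  have x0S: "x0 \<in> S" and nx0: "norm x0 = 1" using x0 by auto
  have x0x0: "x0 \<bullet> x0 = 1" using nx0 by (simp add: dot_square_norm)
  have bound: "?q y \<le> mu * (y \<bullet> y)" if "y \<in> S" for y
  proof (cases "y = 0")
    case True then show ?thesis by simp
  next
    case False
    let ?z = "(1/norm y) *\<^sub>R y"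
    have "?z \<in> ?K"
    proof
      show "?z \<in> S" using that S by (simp add: subspace_scale)
      show "?z \<in> sphere 0 1" using False by simp
    qed
    hence "?q ?z \<le> mu" unfolding mu_def by (rule x0(2))
    moreover have "?q ?z = ?q y / (norm y)^2"
      by (simp add: matrix_vector_mult_scaleR power2_eq_square)
    moreover have "y \<bullet> y = (norm y)^2" by (simp add: dot_square_norm)
    moreover have "(norm y)^2 > 0" using False by simp
    ultimately show ?thesis by (simp add: pos_divide_le_eq)
  qed
  have orth: "z \<bullet> (M *v x0 - mu *\<^sub>R x0) = 0" if "z \<in> S" for z
  proof -
    let ?c = "mu * (x0 \<bullet> z) - z \<bullet> (M *v x0)"
    let ?d = "mu * (z \<bullet> z) - ?q z"
    have d0: "?d \<ge> 0" using bound[OF that] by simp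
    have quad: "0 \<le> 2*e*?c + e^2 * ?d" for e
    proof -
      have "x0 + e *\<^sub>R z \<in> S" using x0S that S by (simp add: subspace_add subspace_mul)
      from bound[OF this]
      have "?q (x0 + e *\<^sub>R z) \<le> mu * ((x0 + e *\<^sub>R z) \<bullet> (x0 + e *\<^sub>R z))" .
      moreover have "?q (x0 + e *\<^sub>R z) = mu + 2*e*(z \<bullet> (M *v x0)) + e^2 * ?q z"
      proof -
        have h: "x0 \<bullet> (M *v z) = z \<bullet> (M *v x0)" using sym_inner[OF sym, of z x0] by (simp add: inner_commute)
        have "?q (x0 + e *\<^sub>R z) = x0 \<bullet> (M *v x0) + e*(x0 \<bullet> (M *v z)) + e*(z \<bullet> (M *v x0)) + e*e*(z \<bullet> (M *v z))"
          by (simp add: matrix_vector_right_distrib matrix_vector_mult_scaleR inner_add_left inner_add_right algebra_simps)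
        then show ?thesis unfolding h mu_def by (simp add: power2_eq_square)
      qed
      moreover have "(x0 + e *\<^sub>R z) \<bullet> (x0 + e *\<^sub>R z) = 1 + 2*e*(x0 \<bullet> z) + e^2*(z \<bullet> z)"
      proof -
        have "(x0 + e *\<^sub>R z) \<bullet> (x0 + e *\<^sub>R z) = x0 \<bullet> x0 + e*(x0 \<bullet> z) + e*(z \<bullet> x0) + e*e*(z \<bullet> z)"
          by (simp add: inner_add_left inner_add_right algebra_simps)
        then show ?thesis using x0x0 by (simp add: inner_commute power2_eq_square)
      qed
      moreover have key: "\<And>a b m q. mu * (1 + 2*e*a + e^2*b) - (mu + 2*e*m + e^2*q) = 2*e*(mu*a - m) + e^2*(mu*b - q)"
        by (simp add: algebra_simps)
      ultimately show ?thesis by (metis diff_ge_0_iff_ge)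
    qed
    have "?c = 0" by (rule quad_nonneg_zero[OF quad d0])
    then show ?thesis by (simp add: inner_diff_right inner_commute)
  qed
  have "M *v x0 - mu *\<^sub>R x0 \<in> S"
    using inv[OF x0S] x0S S by (simp add: subspace_diff subspace_mul)
  from orth[OF this] have "M *v x0 - mu *\<^sub>R x0 = 0" by simp
  hence "M *v x0 = mu *\<^sub>R x0" by simp
  then show ?thesis using x0S nx0 bound unfolding mu_def by blast
qed


definition eig_onb :: "real^'d^'d \<Rightarrow> (real^'d) set \<Rightarrow> bool" where
  "eig_onb M U \<longleftrightarrow> pairwise orthogonal U \<and> (\<forall>u\<in>U. norm u = 1 \<and> M *v u = (u \<bullet> (M *v u)) *\<^sub>R u)"

lemma eig_onb_indep: "eig_onb M U \<Longrightarrow> independent U"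
  unfolding eig_onb_def
  by (rule pairwise_orthogonal_independent) auto

lemma eig_onb_finite: "eig_onb M U \<Longrightarrow> finite U \<and> card U \<le> DIM(real^'d)"
  for U :: "(real^'d) set"
  using independent_bound[OF eig_onb_indep] by blast

lemma spectral:
  fixes M :: "real^'d^'d"
  assumes sym: "transpose M = M"
  shows "\<exists>U. eig_onb M U \<and> (\<forall>x. (\<forall>u\<in>U. x \<bullet> u = 0) \<longrightarrow> x = 0)"
proof -
  let ?C = "{card U | U. eig_onb M U}"
  have "?C \<subseteq> {..DIM(real^'d)}"
  proof
    fix n assume "n \<in> ?C"
    then obtain U where "n = card U" "eig_onb M U" by blast
    then show "n \<in> {..DIM(real^'d)}" using eig_onb_finite[of M U] by simp
  qed
  then have fin: "finite ?C" using finite_subset by blast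
  have "eig_onb M {}" by (simp add: eig_onb_def)
  hence ne: "?C \<noteq> {}" by blast
  have "Max ?C \<in> ?C" using Max_in[OF fin ne] .
  then obtain U where U: "eig_onb M U" "card U = Max ?C" by (smt (verit) mem_Collect_eq)
  have maxc: "card U' \<le> card U" if "eig_onb M U'" for U'
  proof -
    have "card U' \<in> ?C" using that by blast
    from Max_ge[OF fin this] show ?thesis using U(2) by simp
  qed
  have "x = 0" if x: "\<forall>u\<in>U. x \<bullet> u = 0" for x
  proof (rule ccontr)
    assume nz: "x \<noteq> 0"
    define S where "S = {y. \<forall>u\<in>U. y \<bullet> u = 0}"
    have sub: "subspace S"
      unfolding subspace_def S_def by (auto simp: inner_add_left)
    have inv: "M *v y \<in> S" if "y \<in> S" for y
    proof -
      have "(M *v y) \<bullet> u = 0" if "u \<in> U" for u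
      proof -
        have "(M *v y) \<bullet> u = y \<bullet> (M *v u)" by (rule sym_inner[OF sym])
        also have "M *v u = (u \<bullet> (M *v u)) *\<^sub>R u" using U(1) `u \<in> U` by (simp add: eig_onb_def)
        finally show ?thesis using `y \<in> S` `u \<in> U` by (simp add: S_def)
      qed
      then show ?thesis by (simp add: S_def)
    qed
    have "x \<in> S" using x by (simp add: S_def)
    from var_eigvec[OF sym sub inv this nz]
    obtain x0 where x0: "x0 \<in> S" "norm x0 = 1" "M *v x0 = (x0 \<bullet> (M *v x0)) *\<^sub>R x0"
      by blast
    have x0U: "x0 \<notin> U"
    proof
      assume "x0 \<in> U"
      then have "x0 \<bullet> x0 = 0" using x0(1) by (simp add: S_def)
      then show False using x0(2) by simp
    qed
    have o1: "\<forall>u\<in>U. orthogonal x0 u \<and> orthogonal u x0"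
      using x0(1) by (simp add: S_def orthogonal_def inner_commute)
    have "pairwise orthogonal (insert x0 U)"
      using U(1) o1 unfolding eig_onb_def pairwise_insert by blast
    moreover have "\<forall>u\<in>insert x0 U. norm u = 1 \<and> M *v u = (u \<bullet> (M *v u)) *\<^sub>R u"
      using U(1) x0 unfolding eig_onb_def by blast
    ultimately have "eig_onb M (insert x0 U)" unfolding eig_onb_def by blast
    from maxc[OF this] have "card (insert x0 U) \<le> card U" .
    moreover have "finite U" using eig_onb_finite[OF U(1)] by blast
    ultimately show False using x0U by simp
  qed
  then show ?thesis using U(1) by blast
qed


lemma onb_expand:
  fixes U :: "(real^'d) set"
  assumes U: "eig_onb M U" and compl: "\<forall>x. (\<forall>u\<in>U. x \<bullet> u = 0) \<longrightarrow> x = 0"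
  shows "x = (\<Sum>u\<in>U. (x \<bullet> u) *\<^sub>R u)"
proof -
  have fin: "finite U" using eig_onb_finite[OF U] by blast
  have "(x - (\<Sum>u\<in>U. (x \<bullet> u) *\<^sub>R u)) \<bullet> u' = 0" if "u' \<in> U" for u'
  proof -
    have "(\<Sum>u\<in>U. (x \<bullet> u) *\<^sub>R u) \<bullet> u' = (\<Sum>u\<in>U. (x \<bullet> u) * (u \<bullet> u'))"
      by (simp add: inner_sum_left)
    also have "\<dots> = (\<Sum>u\<in>{u'}. (x \<bullet> u) * (u \<bullet> u'))"
    proof (rule sum.mono_neutral_right[OF fin])
      show "{u'} \<subseteq> U" using that by simp
      show "\<forall>i\<in>U - {u'}. (x \<bullet> i) * (i \<bullet> u') = 0"
        using U that unfolding eig_onb_def pairwise_def orthogonal_def by auto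
    qed
    also have "\<dots> = x \<bullet> u'"
      using U that unfolding eig_onb_def by (simp add: dot_square_norm)
    finally show ?thesis by (simp add: inner_diff_left)
  qed
  then have "x - (\<Sum>u\<in>U. (x \<bullet> u) *\<^sub>R u) = 0" using compl by blast
  then show ?thesis by simp
qed

lemma onb_inner:
  fixes U :: "(real^'d) set"
  assumes U: "eig_onb M U" and compl: "\<forall>x. (\<forall>u\<in>U. x \<bullet> u = 0) \<longrightarrow> x = 0"
  shows "x \<bullet> y = (\<Sum>u\<in>U. (x \<bullet> u) * (u \<bullet> y))"
proof -
  have "x \<bullet> y = (\<Sum>u\<in>U. (x \<bullet> u) *\<^sub>R u) \<bullet> y" using onb_expand[OF U compl, of x] by simp
  then show ?thesis by (simp add: inner_sum_left)
qed

lemma onb_delta: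
  fixes U :: "(real^'d) set"
  assumes U: "eig_onb M U" and compl: "\<forall>x. (\<forall>u\<in>U. x \<bullet> u = 0) \<longrightarrow> x = 0"
  shows "(\<Sum>u\<in>U. u $ i * u $ j) = (if i = j then 1 else 0)"
proof -
  have "axis i 1 \<bullet> axis j (1::real) = (\<Sum>u\<in>U. (axis i 1 \<bullet> u) * (u \<bullet> axis j 1))"
    by (rule onb_inner[OF U compl])
  moreover have "axis i 1 \<bullet> axis j (1::real) = (if i = j then 1 else 0)"
  proof -
    have "axis i 1 \<bullet> axis j (1::real) = axis i 1 $ j" by (simp add: inner_axis)
    also have "\<dots> = (if i = j then 1 else 0)" by (simp add: axis_def)
    finally show ?thesis .
  qed
  moreover have "(axis i 1 \<bullet> u) * (u \<bullet> axis j 1) = u $ i * u $ j" for u :: "real^'d"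
    by (simp add: inner_axis inner_axis')
  ultimately show ?thesis by simp
qed

lemma trace_mul: "trace ((X::real^'d^'d) ** Y) = (\<Sum>i\<in>UNIV. \<Sum>j\<in>UNIV. X$i$j * Y$j$i)"
  by (simp add: trace_def matrix_matrix_mult_def)

lemma quad_sum: "x \<bullet> ((X::real^'d^'d) *v x) = (\<Sum>i\<in>UNIV. \<Sum>j\<in>UNIV. X$i$j * (x$i * x$j))"
  by (simp add: inner_vec_def matrix_vector_mult_def sum_distrib_left mult_ac)

lemma onb_trace:
  fixes U :: "(real^'d) set"
  assumes U: "eig_onb M U" and compl: "\<forall>x. (\<forall>u\<in>U. x \<bullet> u = 0) \<longrightarrow> x = 0"
  shows "trace X = (\<Sum>u\<in>U. u \<bullet> (X *v u))"
proof -
  have "(\<Sum>u\<in>U. u \<bullet> (X *v u)) = (\<Sum>u\<in>U. \<Sum>i\<in>UNIV. \<Sum>j\<in>UNIV. X$i$j * (u$i * u$j))"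
    by (simp add: quad_sum)
  also have "\<dots> = (\<Sum>i\<in>UNIV. \<Sum>u\<in>U. \<Sum>j\<in>UNIV. X$i$j * (u$i * u$j))"
    by (rule sum.swap)
  also have "\<dots> = (\<Sum>i\<in>UNIV. \<Sum>j\<in>UNIV. \<Sum>u\<in>U. X$i$j * (u$i * u$j))"
    by (rule sum.cong[OF refl], rule sum.swap)
  also have "\<dots> = (\<Sum>i\<in>UNIV. \<Sum>j\<in>UNIV. X$i$j * (\<Sum>u\<in>U. u$i * u$j))"
    by (simp add: sum_distrib_left)
  also have "\<dots> = (\<Sum>i\<in>UNIV. \<Sum>j\<in>UNIV. X$i$j * (if i = j then 1 else 0))"
    by (simp add: onb_delta[OF U compl])
  also have "\<dots> = trace X" by (simp add: trace_def if_distrib cong: if_cong)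
  finally show ?thesis by simp
qed


lemma eig_finite:
  fixes M :: "real^'d^'d"
  assumes sym: "transpose M = M"
  shows "finite {\<mu>. is_eigenvalue M \<mu>}"
proof -
  let ?F = "{\<mu>. is_eigenvalue M \<mu>}"
  define ev where "ev \<mu> = (SOME x. x \<noteq> 0 \<and> M *v x = \<mu> *\<^sub>R x)" for \<mu>
  have ev: "ev \<mu> \<noteq> 0 \<and> M *v ev \<mu> = \<mu> *\<^sub>R ev \<mu>" if "\<mu> \<in> ?F" for \<mu>
    using that unfolding ev_def is_eigenvalue_def by (metis (mono_tags, lifting) mem_Collect_eq someI_ex)
  have orth: "ev \<mu> \<bullet> ev \<nu> = 0" if "\<mu> \<in> ?F" "\<nu> \<in> ?F" "\<mu> \<noteq> \<nu>" for \<mu> \<nu>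
  proof -
    have "\<mu> * (ev \<mu> \<bullet> ev \<nu>) = (M *v ev \<mu>) \<bullet> ev \<nu>" using ev[OF that(1)] by simp
    also have "\<dots> = ev \<mu> \<bullet> (M *v ev \<nu>)" by (rule sym_inner[OF sym])
    also have "\<dots> = \<nu> * (ev \<mu> \<bullet> ev \<nu>)" using ev[OF that(2)] by simp
    finally have "(\<mu> - \<nu>) * (ev \<mu> \<bullet> ev \<nu>) = 0" by (simp add: algebra_simps)
    then show ?thesis using that(3) by simp
  qed
  have inj: "inj_on ev ?F"
  proof (rule inj_onI)
    fix \<mu> \<nu> assume h: "\<mu> \<in> ?F" "\<nu> \<in> ?F" "ev \<mu> = ev \<nu>"
    show "\<mu> = \<nu>"
    proof (rule ccontr)
      assume "\<mu> \<noteq> \<nu>"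
      then have "ev \<mu> \<bullet> ev \<mu> = 0" using orth[OF h(1,2)] h(3) by simp
      then show False using ev[OF h(1)] by simp
    qed
  qed
  have "pairwise orthogonal (ev ` ?F)"
    unfolding pairwise_def orthogonal_def using orth by auto
  moreover have "0 \<notin> ev ` ?F" using ev by auto
  ultimately have "independent (ev ` ?F)" by (rule pairwise_orthogonal_independent)
  then have "finite (ev ` ?F)" using independent_bound by blast
  then show ?thesis using finite_imageD[OF _ inj] by blast
qed

lemma lam2_prop:
  fixes G :: "real^'d^'d" and v :: "real^'d"
  assumes sym: "transpose G = G" and vnz: "v \<noteq> 0"
    and veig: "G *v v = lambda1 G *\<^sub>R v"
    and gap: "lambda1 G - lambda2 G > 0"
    and yv: "y \<bullet> v = 0"
  shows "y \<bullet> (G *v y) \<le> lambda2 G * (y \<bullet> y)"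
proof (cases "y = 0")
  case True then show ?thesis by simp
next
  case False
  define S where "S = {y. y \<bullet> v = 0}"
  have sub: "subspace S" unfolding subspace_def S_def by (auto simp: inner_add_left)
  have inv: "G *v x \<in> S" if "x \<in> S" for x
  proof -
    have "(G *v x) \<bullet> v = x \<bullet> (G *v v)" by (rule sym_inner[OF sym])
    also have "\<dots> = 0" using that veig by (simp add: S_def)
    finally show ?thesis by (simp add: S_def)
  qed
  have yS: "y \<in> S" using yv by (simp add: S_def)
  from var_eigvec[OF sym sub inv yS False]
  obtain x0 where x0: "x0 \<in> S" "norm x0 = 1" "G *v x0 = (x0 \<bullet> (G *v x0)) *\<^sub>R x0"
    "\<forall>y\<in>S. y \<bullet> (G *v y) \<le> (x0 \<bullet> (G *v x0)) * (y \<bullet> y)" by blast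
  define mu where "mu = x0 \<bullet> (G *v x0)"
  have x0nz: "x0 \<noteq> 0" using x0(2) by auto
  have mueig: "is_eigenvalue G mu" unfolding is_eigenvalue_def mu_def using x0nz x0(3) by blast
  have fin: "finite {\<mu>. is_eigenvalue G \<mu>}" by (rule eig_finite[OF sym])
  have "mu \<le> lambda1 G" unfolding lambda1_def using Max_ge[OF fin] mueig by blast
  have mult: "\<not> eig_mult G (lambda1 G) \<ge> 2"
  proof
    assume "eig_mult G (lambda1 G) \<ge> 2"
    then have "lambda2 G = lambda1 G" by (simp add: lambda2_def)
    then show False using gap by simp
  qed
  have "mu \<noteq> lambda1 G"
  proof
    assume eq: "mu = lambda1 G"
    let ?V = "{x. G *v x = lambda1 G *\<^sub>R x}"
    have vx0: "v \<bullet> x0 = 0" using x0(1) by (simp add: S_def inner_commute)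
    have "v \<noteq> x0" using vx0 vnz by auto
    have "independent {v, x0}"
      by (rule pairwise_orthogonal_independent)
        (use vx0 vnz x0nz in \<open>auto simp: pairwise_insert orthogonal_def inner_commute\<close>)
    moreover have "{v, x0} \<subseteq> ?V" using veig x0(3) eq unfolding mu_def by auto
    ultimately have "card {v, x0} \<le> dim ?V" by (intro independent_card_le_dim)
    then have "eig_mult G (lambda1 G) \<ge> 2" using `v \<noteq> x0` by (simp add: eig_mult_def)
    then show False using mult by simp
  qed
  with `mu \<le> lambda1 G` have "mu < lambda1 G" by simp
  then have "mu \<in> {\<mu>. is_eigenvalue G \<mu> \<and> \<mu> < lambda1 G}" using mueig by simp
  moreover have "finite {\<mu>. is_eigenvalue G \<mu> \<and> \<mu> < lambda1 G}" using fin by simp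
  ultimately have "mu \<le> lambda2 G" unfolding lambda2_def using mult Max_ge by simp
  moreover have "y \<bullet> (G *v y) \<le> mu * (y \<bullet> y)" using x0(4) yS mu_def by blast
  moreover have "y \<bullet> y \<ge> 0" by simp
  ultimately show ?thesis by (meson mult_right_mono order_trans)
qed


lemma outer_mulv: "outer v *v x = (v \<bullet> x) *\<^sub>R v"
  by (simp add: vec_eq_iff outer_def matrix_vector_mult_def inner_vec_def sum_distrib_left mult_ac)

lemma outer_nth: "outer v $ i $ j = v $ i * v $ j"
  by (simp add: outer_def)

lemma vv_one: "norm v = 1 \<Longrightarrow> v \<bullet> v = 1"
  by (simp add: dot_square_norm)

lemma sum_sq_vec: "(\<Sum>i\<in>UNIV. (v::real^'d) $ i * v $ i) = v \<bullet> v"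
  by (simp add: inner_vec_def)

lemma sparse_l1:
  fixes v :: "real^'d"
  assumes "k_sparse k v" "norm v = 1"
  shows "(\<Sum>i\<in>UNIV. \<bar>v $ i\<bar>)^2 \<le> real k"
proof -
  let ?S = "{i. v $ i \<noteq> 0}"
  have cS: "card ?S \<le> k" using assms(1) by (simp add: k_sparse_def)
  have "(\<Sum>i\<in>UNIV. \<bar>v $ i\<bar>) = (\<Sum>i\<in>?S. \<bar>v $ i\<bar>)"
    by (rule sum.mono_neutral_right) auto
  also have "\<dots> = (\<Sum>i\<in>?S. 1 * \<bar>v $ i\<bar>)" by simp
  finally have "(\<Sum>i\<in>UNIV. \<bar>v $ i\<bar>)^2 = (\<Sum>i\<in>?S. 1 * \<bar>v $ i\<bar>)^2" by simp
  also have "\<dots> \<le> (\<Sum>i\<in>?S. 1\<^sup>2) * (\<Sum>i\<in>?S. \<bar>v $ i\<bar>\<^sup>2)"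
    by (rule Cauchy_Schwarz_ineq_sum)
  also have "(\<Sum>i\<in>?S. \<bar>v $ i\<bar>\<^sup>2) = (\<Sum>i\<in>?S. v $ i * v $ i)"
    by (simp add: power2_eq_square)
  also have "\<dots> = (\<Sum>i\<in>UNIV. v $ i * v $ i)"
    by (rule sum.mono_neutral_left) auto
  also have "\<dots> = 1" using assms(2) by (simp add: sum_sq_vec vv_one)
  also have "(\<Sum>i\<in>?S. (1::real)\<^sup>2) = real (card ?S)" by simp
  finally show ?thesis using cS by simp
qed

lemma outer_feasible:
  fixes v :: "real^'d"
  assumes "k_sparse k v" "norm v = 1"
  shows "sdp_feasible k (outer v)"
proof -
  have "trace (outer v) = 1"
    using assms(2) by (simp add: trace_def outer_nth sum_sq_vec vv_one)
  moreover have "(\<Sum>i\<in>UNIV. \<Sum>j\<in>UNIV. \<bar>outer v $ i $ j\<bar>) = (\<Sum>i\<in>UNIV. \<bar>v $ i\<bar>)^2"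
    by (simp add: outer_nth abs_mult power2_eq_square sum_product)
  moreover have "psd (outer v)"
  proof -
    have "transpose (outer v) = outer v"
      by (simp add: vec_eq_iff transpose_def outer_nth mult.commute)
    moreover have "0 \<le> x \<bullet> (outer v *v x)" for x
      by (simp add: outer_mulv inner_commute)
    ultimately show ?thesis by (simp add: psd_def symmetric_mat_def)
  qed
  ultimately show ?thesis using sparse_l1[OF assms] by (simp add: sdp_feasible_def)
qed

lemma E_part:
  fixes E W V :: "real^'d^'d"
  assumes "\<forall>i j. \<bar>E $ i $ j\<bar> \<le> a"
  shows "trace (E ** W) - trace (E ** V) \<le> a * (\<Sum>i\<in>UNIV. \<Sum>j\<in>UNIV. \<bar>W $ i $ j - V $ i $ j\<bar>)"
proof -
  have "trace (E ** W) - trace (E ** V) = (\<Sum>i\<in>UNIV. \<Sum>j\<in>UNIV. E$i$j * (W$j$i - V$j$i))"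
    by (simp add: trace_mul sum_subtractf right_diff_distrib)
  also have "\<dots> \<le> (\<Sum>i\<in>UNIV. \<Sum>j\<in>UNIV. a * \<bar>W$j$i - V$j$i\<bar>)"
  proof (intro sum_mono)
    fix i j
    have "E$i$j * (W$j$i - V$j$i) \<le> \<bar>E$i$j\<bar> * \<bar>W$j$i - V$j$i\<bar>"
      by (metis abs_ge_self abs_mult)
    also have "\<dots> \<le> a * \<bar>W$j$i - V$j$i\<bar>"
      using assms by (intro mult_right_mono) auto
    finally show "E$i$j * (W$j$i - V$j$i) \<le> a * \<bar>W$j$i - V$j$i\<bar>" .
  qed
  also have "\<dots> = a * (\<Sum>i\<in>UNIV. \<Sum>j\<in>UNIV. \<bar>W$j$i - V$j$i\<bar>)"
    by (simp add: sum_distrib_left)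
  also have "(\<Sum>i\<in>UNIV. \<Sum>j\<in>UNIV. \<bar>W$j$i - V$j$i\<bar>) = (\<Sum>i\<in>UNIV. \<Sum>j\<in>UNIV. \<bar>W$i$j - V$i$j\<bar>)"
    by (rule sum.swap)
  finally show ?thesis .
qed

lemma l1_split:
  fixes W :: "real^'d^'d" and v :: "real^'d"
  assumes sp: "k_sparse k v" and W1: "(\<Sum>i\<in>UNIV. \<Sum>j\<in>UNIV. \<bar>W$i$j\<bar>) \<le> real k"
  shows "(\<Sum>i\<in>UNIV. \<Sum>j\<in>UNIV. \<bar>W$i$j - v$i* v$j\<bar>)
         \<le> real k * (1 + sqrt (\<Sum>i\<in>UNIV. \<Sum>j\<in>UNIV. (W$i$j - v$i* v$j)^2))"
proof -
  let ?S = "{i. v $ i \<noteq> 0}"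
  let ?T = "?S \<times> ?S"
  define h where "h p = \<bar>W $ fst p $ snd p - v $ fst p * v $ snd p\<bar>" for p
  have cS: "card ?S \<le> k" using sp by (simp add: k_sparse_def)
  have e1: "(\<Sum>i\<in>UNIV. \<Sum>j\<in>UNIV. \<bar>W$i$j - v$i* v$j\<bar>) = (\<Sum>p\<in>UNIV. h p)"
    unfolding h_def UNIV_Times_UNIV[symmetric] sum.cartesian_product by (simp add: split_beta)
  have e2: "(\<Sum>i\<in>UNIV. \<Sum>j\<in>UNIV. (W$i$j - v$i* v$j)^2) = (\<Sum>p\<in>UNIV. (h p)^2)"
    unfolding h_def UNIV_Times_UNIV[symmetric] sum.cartesian_product by (simp add: split_beta)
  have eW: "(\<Sum>i\<in>UNIV. \<Sum>j\<in>UNIV. \<bar>W$i$j\<bar>) = (\<Sum>p\<in>UNIV. \<bar>W $ fst p $ snd p\<bar>)"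
    unfolding UNIV_Times_UNIV[symmetric] sum.cartesian_product by (simp add: split_beta)
  have split: "(\<Sum>p\<in>UNIV. h p) = (\<Sum>p\<in>?T. h p) + (\<Sum>p\<in>UNIV - ?T. h p)"
    by (metis add.commute finite sum.subset_diff top_greatest)
  have off: "(\<Sum>p\<in>UNIV - ?T. h p) \<le> real k"
  proof -
    have "(\<Sum>p\<in>UNIV - ?T. h p) = (\<Sum>p\<in>UNIV - ?T. \<bar>W $ fst p $ snd p\<bar>)"
      by (rule sum.cong) (auto simp: h_def)
    also have "\<dots> \<le> (\<Sum>p\<in>UNIV. \<bar>W $ fst p $ snd p\<bar>)"
      by (rule sum_mono2) auto
    finally show ?thesis using W1 eW by simp
  qed
  have on: "(\<Sum>p\<in>?T. h p) \<le> real k * sqrt (\<Sum>p\<in>UNIV. (h p)^2)"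
  proof -
    have "(\<Sum>p\<in>?T. h p)^2 = (\<Sum>p\<in>?T. 1 * h p)^2" by simp
    also have "\<dots> \<le> (\<Sum>p\<in>?T. 1\<^sup>2) * (\<Sum>p\<in>?T. (h p)\<^sup>2)" by (rule Cauchy_Schwarz_ineq_sum)
    also have "(\<Sum>p\<in>?T. (1::real)\<^sup>2) = real (card ?S) ^ 2"
      by (simp add: card_cartesian_product power2_eq_square)
    also have "(\<Sum>p\<in>?T. (h p)\<^sup>2) \<le> (\<Sum>p\<in>UNIV. (h p)\<^sup>2)"
      by (rule sum_mono2) auto
    finally have "(\<Sum>p\<in>?T. h p)^2 \<le> real (card ?S) ^ 2 * (\<Sum>p\<in>UNIV. (h p)\<^sup>2)"
      by (simp add: mult_left_mono)
    then have "(\<Sum>p\<in>?T. h p) \<le> sqrt (real (card ?S) ^ 2 * (\<Sum>p\<in>UNIV. (h p)\<^sup>2))"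
      by (rule real_le_rsqrt)
    also have "\<dots> = real (card ?S) * sqrt (\<Sum>p\<in>UNIV. (h p)\<^sup>2)"
      by (simp add: real_sqrt_mult)
    also have "\<dots> \<le> real k * sqrt (\<Sum>p\<in>UNIV. (h p)\<^sup>2)"
      using cS by (intro mult_right_mono) (auto intro: sum_nonneg)
    finally show ?thesis .
  qed
  show ?thesis unfolding e1 e2 split using on off by (simp add: algebra_simps)
qed


lemma rayleigh_split:
  fixes G :: "real^'d^'d"
  assumes sym: "transpose G = G" and vv: "v \<bullet> v = 1" and veig: "G *v v = l1 *\<^sub>R v"
    and l2: "\<And>y. y \<bullet> v = 0 \<Longrightarrow> y \<bullet> (G *v y) \<le> l2 * (y \<bullet> y)"
    and uu: "u \<bullet> u = 1"
  shows "u \<bullet> (G *v u) \<le> l1 * (u \<bullet> v)^2 + l2 * (1 - (u \<bullet> v)^2)"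
proof -
  define \<alpha> where "\<alpha> = u \<bullet> v"
  define y where "y = u - \<alpha> *\<^sub>R v"
  have yv: "y \<bullet> v = 0" using vv by (simp add: y_def \<alpha>_def inner_diff_left)
  have u: "u = y + \<alpha> *\<^sub>R v" by (simp add: y_def)
  have vy: "v \<bullet> y = 0" using yv by (simp add: inner_commute)
  have Gvy: "v \<bullet> (G *v y) = 0"
  proof -
    have "v \<bullet> (G *v y) = (G *v v) \<bullet> y" by (rule sym_inner[OF sym, symmetric])
    then show ?thesis using veig vy by simp
  qed
  have yGv: "y \<bullet> (G *v v) = 0" using veig yv by simp
  have vGv: "v \<bullet> (G *v v) = l1" using veig vv by simp
  have "u \<bullet> (G *v u) = y \<bullet> (G *v y) + \<alpha> * (y \<bullet> (G *v v)) + \<alpha> * (v \<bullet> (G *v y)) + \<alpha> * \<alpha> * (v \<bullet> (G *v v))"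
    unfolding u by (simp add: matrix_vector_right_distrib matrix_vector_mult_scaleR inner_add_left inner_add_right algebra_simps)
  also have "\<dots> = y \<bullet> (G *v y) + \<alpha>^2 * l1" using Gvy yGv vGv by (simp add: power2_eq_square)
  finally have 1: "u \<bullet> (G *v u) = y \<bullet> (G *v y) + \<alpha>^2 * l1" .
  have "u \<bullet> u = y \<bullet> y + 2 * \<alpha> * (y \<bullet> v) + \<alpha> * \<alpha> * (v \<bullet> v)"
    unfolding u by (simp add: inner_add_left inner_add_right inner_commute algebra_simps)
  then have 2: "y \<bullet> y = 1 - \<alpha>^2" using uu yv vv by (simp add: power2_eq_square)
  have 3: "l2 * (y \<bullet> y) = l2 - l2 * \<alpha>^2" unfolding 2 by (simp add: right_diff_distrib)
  have "u \<bullet> (G *v u) \<le> l2 - l2 * \<alpha>^2 + \<alpha>^2 * l1" using 1 3 l2[OF yv] by linarith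
  then show ?thesis unfolding \<alpha>_def[symmetric] by (simp add: algebra_simps)
qed

lemma psd_sym: "psd W \<Longrightarrow> transpose W = W"
  by (simp add: psd_def symmetric_mat_def)

lemma G_part:
  fixes G W :: "real^'d^'d"
  assumes sym: "transpose G = G" and vv: "v \<bullet> v = 1" and veig: "G *v v = l1 *\<^sub>R v"
    and l2: "\<And>y. y \<bullet> v = 0 \<Longrightarrow> y \<bullet> (G *v y) \<le> l2 * (y \<bullet> y)"
    and psdW: "psd W" and trW: "trace W = 1"
  shows "trace (G ** W) \<le> l1 * (v \<bullet> (W *v v)) + l2 * (1 - v \<bullet> (W *v v))"
    and "(\<Sum>i\<in>UNIV. \<Sum>j\<in>UNIV. (W$i$j)^2) \<le> 1"
proof -
  have symW: "transpose W = W" using psdW by (rule psd_sym)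
  obtain U where U: "eig_onb W U" and compl: "\<forall>x. (\<forall>u\<in>U. x \<bullet> u = 0) \<longrightarrow> x = 0"
    using spectral[OF symW] by blast
  have finU: "finite U" using eig_onb_finite[OF U] by blast
  define w where "w u = u \<bullet> (W *v u)" for u
  have Wu: "W *v u = w u *\<^sub>R u" if "u \<in> U" for u
    using U that unfolding eig_onb_def w_def by blast
  have uu: "u \<bullet> u = 1" if "u \<in> U" for u
    using U that unfolding eig_onb_def by (simp add: dot_square_norm)
  have w0: "w u \<ge> 0" for u using psdW unfolding psd_def w_def by blast
  have sumw: "(\<Sum>u\<in>U. w u) = 1"
    using onb_trace[OF U compl, of W] trW by (simp add: w_def)
  have w1: "w u \<le> 1" if "u \<in> U" for u
  proof -
    have "w u \<le> (\<Sum>u\<in>U. w u)" by (rule member_le_sum[OF that]) (use w0 finU in auto)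
    then show ?thesis using sumw by simp
  qed
  have c: "v \<bullet> (W *v v) = (\<Sum>u\<in>U. w u * (u \<bullet> v)^2)"
  proof -
    have "v \<bullet> (W *v v) = (\<Sum>u\<in>U. (v \<bullet> u) * (u \<bullet> (W *v v)))" by (rule onb_inner[OF U compl])
    also have "\<dots> = (\<Sum>u\<in>U. w u * (u \<bullet> v)^2)"
    proof (rule sum.cong[OF refl])
      fix u assume "u \<in> U"
      have "u \<bullet> (W *v v) = (W *v u) \<bullet> v" by (rule sym_inner[OF symW, symmetric])
      also have "\<dots> = w u * (u \<bullet> v)" using Wu[OF `u \<in> U`] by simp
      finally show "(v \<bullet> u) * (u \<bullet> (W *v v)) = w u * (u \<bullet> v)^2"
        by (simp add: inner_commute power2_eq_square)
    qed
    finally show ?thesis .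
  qed
  have "trace (G ** W) = (\<Sum>u\<in>U. u \<bullet> ((G ** W) *v u))" by (rule onb_trace[OF U compl])
  also have "\<dots> = (\<Sum>u\<in>U. w u * (u \<bullet> (G *v u)))"
  proof (rule sum.cong[OF refl])
    fix u assume "u \<in> U"
    have "(G ** W) *v u = G *v (W *v u)" by (simp add: matrix_vector_mul_assoc)
    then show "u \<bullet> ((G ** W) *v u) = w u * (u \<bullet> (G *v u))"
      using Wu[OF `u \<in> U`] by (simp add: matrix_vector_mult_scaleR)
  qed
  also have "\<dots> \<le> (\<Sum>u\<in>U. w u * (l1 * (u \<bullet> v)^2 + l2 * (1 - (u \<bullet> v)^2)))"
  proof (rule sum_mono)
    fix u assume "u \<in> U"
    show "w u * (u \<bullet> (G *v u)) \<le> w u * (l1 * (u \<bullet> v)^2 + l2 * (1 - (u \<bullet> v)^2))"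
      by (rule mult_left_mono[OF rayleigh_split[OF sym vv veig l2 uu[OF `u \<in> U`]] w0])
  qed
  also have "\<dots> = l1 * (\<Sum>u\<in>U. w u * (u \<bullet> v)^2) + l2 * ((\<Sum>u\<in>U. w u) - (\<Sum>u\<in>U. w u * (u \<bullet> v)^2))"
    by (simp add: algebra_simps sum.distrib sum_distrib_left sum_subtractf)
  finally show "trace (G ** W) \<le> l1 * (v \<bullet> (W *v v)) + l2 * (1 - v \<bullet> (W *v v))"
    using c sumw by simp
  have "(\<Sum>i\<in>UNIV. \<Sum>j\<in>UNIV. (W$i$j)^2) = trace (W ** W)"
  proof -
    have "W $ j $ i = W $ i $ j" for i j using symW by (metis transpose_def vec_lambda_beta)
    then show ?thesis by (simp add: trace_mul power2_eq_square)
  qed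
  also have "\<dots> = (\<Sum>u\<in>U. u \<bullet> ((W ** W) *v u))" by (rule onb_trace[OF U compl])
  also have "\<dots> = (\<Sum>u\<in>U. w u * w u)"
  proof (rule sum.cong[OF refl])
    fix u assume "u \<in> U"
    have "(W ** W) *v u = W *v (W *v u)" by (simp add: matrix_vector_mul_assoc)
    then show "u \<bullet> ((W ** W) *v u) = w u * w u"
      using Wu[OF `u \<in> U`] uu[OF `u \<in> U`] by (simp add: matrix_vector_mult_scaleR)
  qed
  also have "\<dots> \<le> (\<Sum>u\<in>U. w u)"
  proof (rule sum_mono)
    fix u assume "u \<in> U"
    show "w u * w u \<le> w u" using w0[of u] w1[OF `u \<in> U`] by (simp add: mult_left_le)
  qed
  finally show "(\<Sum>i\<in>UNIV. \<Sum>j\<in>UNIV. (W$i$j)^2) \<le> 1" using sumw by simp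
qed

lemma frob_expand:
  fixes W :: "real^'d^'d"
  shows "(\<Sum>i\<in>UNIV. \<Sum>j\<in>UNIV. (W$i$j - v$i * v$j)^2)
     = (\<Sum>i\<in>UNIV. \<Sum>j\<in>UNIV. (W$i$j)^2) - 2 * (v \<bullet> (W *v v)) + (v \<bullet> v)^2"
proof -
  have e: "(W$i$j - v$i * v$j)^2 = (W$i$j)^2 - 2 * (W$i$j * (v$i * v$j)) + (v$i * v$i) * (v$j * v$j)" for i j
    by (simp add: power2_eq_square algebra_simps)
  have "(v \<bullet> v)^2 = (\<Sum>i\<in>UNIV. \<Sum>j\<in>UNIV. (v$i * v$i) * (v$j * v$j))"
    by (simp add: inner_vec_def power2_eq_square sum_product)
  then show ?thesis
    by (simp add: e quad_sum sum.distrib sum_subtractf sum_distrib_left)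
qed

lemma final_alg:
  fixes f y :: real
  assumes "f \<ge> 0" "y \<ge> 0" "f^2 \<le> y * (1 + f)"
  shows "f \<le> y + sqrt y"
proof (rule ccontr)
  assume "\<not> f \<le> y + sqrt y"
  then have gt: "f > y + sqrt y" by simp
  have sy: "sqrt y \<ge> 0" using assms(2) by simp
  have fs: "f > sqrt y" using gt assms(2) by linarith
  have fp: "f > 0" using fs sy by linarith
  have "f * f > f * (y + sqrt y)" using gt fp by (intro mult_strict_left_mono)
  moreover have "sqrt y * f \<ge> sqrt y * sqrt y" using fs sy by (intro mult_left_mono) auto
  moreover have "sqrt y * sqrt y = y" using assms(2) by simp
  ultimately have "f^2 > y * (1 + f)" by (simp add: power2_eq_square algebra_simps)
  then show False using assms(3) by simp
qed


theorem proposition7: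
  fixes B :: "real^'d^'n" and E :: "real^'d^'d" and v :: "real^'d"
    and a :: real and k :: nat and Wopt :: "real^'d^'d"
  defines "G \<equiv> transpose B ** B"
  defines "A \<equiv> G + E"
  assumes E_sym: "symmetric_mat E"
    and E_bound: "\<forall>i j. \<bar>E $ i $ j\<bar> \<le> a"
    and v_sparse: "k_sparse k v"
    and v_unit: "norm v = 1"
    and v_eig: "G *v v = lambda1 G *\<^sub>R v"
    and gap: "lambda1 G - lambda2 G > 0"
    and W_feas: "sdp_feasible k Wopt"
    and W_opt: "\<forall>W. sdp_feasible k W \<longrightarrow> trace (A ** W) \<le> trace (A ** Wopt)"
  shows "frob_norm (Wopt - outer v)
           \<le> 2 * a * real k / (lambda1 G - lambda2 G)
             + sqrt (2 * a * real k / (lambda1 G - lambda2 G))"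
proof -
  define l1 where "l1 = lambda1 G"
  define l2 where "l2 = lambda2 G"
  define \<Delta> where "\<Delta> = l1 - l2"
  define c where "c = v \<bullet> (Wopt *v v)"
  define F where "F = (\<Sum>i\<in>UNIV. \<Sum>j\<in>UNIV. (Wopt$i$j - v$i * v$j)^2)"
  define f where "f = sqrt F"
  have D0: "\<Delta> > 0" using gap by (simp add: \<Delta>_def l1_def l2_def)
  have Gsym: "transpose G = G" unfolding G_def by (simp add: matrix_transpose_mul transpose_transpose)
  have vv: "v \<bullet> v = 1" using v_unit by (rule vv_one)
  have vnz: "v \<noteq> 0" using v_unit by auto
  have l2p: "y \<bullet> (G *v y) \<le> l2 * (y \<bullet> y)" if "y \<bullet> v = 0" for y
    unfolding l2_def by (rule lam2_prop[OF Gsym vnz v_eig gap that])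
  have veig: "G *v v = l1 *\<^sub>R v" using v_eig by (simp add: l1_def)
  have a0: "a \<ge> 0" using E_bound by (meson abs_ge_zero order_trans)
  have Vf: "sdp_feasible k (outer v)" by (rule outer_feasible[OF v_sparse v_unit])
  have psdW: "psd Wopt" and trW: "trace Wopt = 1"
    and W1: "(\<Sum>i\<in>UNIV. \<Sum>j\<in>UNIV. \<bar>Wopt $ i $ j\<bar>) \<le> real k"
    using W_feas by (auto simp: sdp_feasible_def)
  have trA: "trace (A ** X) = trace (G ** X) + trace (E ** X)" for X
    unfolding A_def by (simp add: trace_mul sum.distrib distrib_right)
  have opt: "trace (A ** outer v) \<le> trace (A ** Wopt)" using W_opt Vf by blast
  have trGV: "trace (G ** outer v) = l1"
  proof -
    have "trace (G ** outer v) = v \<bullet> (G *v v)"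
      by (simp add: trace_mul quad_sum outer_nth mult_ac)
    then show ?thesis using veig vv by simp
  qed
  have Ep: "trace (E ** Wopt) - trace (E ** outer v) \<le> a * (real k * (1 + f))"
  proof -
    have "trace (E ** Wopt) - trace (E ** outer v)
        \<le> a * (\<Sum>i\<in>UNIV. \<Sum>j\<in>UNIV. \<bar>Wopt $ i $ j - outer v $ i $ j\<bar>)"
      by (rule E_part[OF E_bound])
    also have "\<dots> = a * (\<Sum>i\<in>UNIV. \<Sum>j\<in>UNIV. \<bar>Wopt $ i $ j - v $ i * v $ j\<bar>)"
      by (simp add: outer_nth)
    also have "\<dots> \<le> a * (real k * (1 + f))"
      using l1_split[OF v_sparse W1] a0 unfolding f_def F_def by (intro mult_left_mono) auto
    finally show ?thesis .
  qed
  have Gp: "trace (G ** Wopt) \<le> l1 * c + l2 * (1 - c)"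
    and W2: "(\<Sum>i\<in>UNIV. \<Sum>j\<in>UNIV. (Wopt$i$j)^2) \<le> 1"
    using G_part[OF Gsym vv veig l2p psdW trW] by (auto simp: c_def)
  have "\<Delta> * (1 - c) \<le> trace (G ** outer v) - trace (G ** Wopt)"
    using trGV Gp by (simp add: \<Delta>_def algebra_simps)
  also have "\<dots> \<le> trace (E ** Wopt) - trace (E ** outer v)"
    using opt trA[of "outer v"] trA[of Wopt] by linarith
  also have "\<dots> \<le> a * (real k * (1 + f))" by (rule Ep)
  finally have main: "\<Delta> * (1 - c) \<le> a * (real k * (1 + f))" .
  have Fe: "F = (\<Sum>i\<in>UNIV. \<Sum>j\<in>UNIV. (Wopt$i$j)^2) - 2 * c + 1"
    unfolding F_def c_def using frob_expand[of Wopt v] vv by simp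
  have F2: "F \<le> 2 * (1 - c)"
  proof -
    define S where "S = (\<Sum>i\<in>UNIV. \<Sum>j\<in>UNIV. (Wopt$i$j)^2)"
    have "S \<le> 1" using W2 unfolding S_def .
    moreover have "F = S - 2 * c + 1" using Fe unfolding S_def .
    ultimately show ?thesis by (simp add: algebra_simps)
  qed
  have F0: "F \<ge> 0" unfolding F_def by (intro sum_nonneg) auto
  have ff: "f^2 = F" using F0 by (simp add: f_def)
  have "\<Delta> * F \<le> 2 * (a * real k * (1 + f))"
  proof -
    have "\<Delta> * F \<le> \<Delta> * (2 * (1 - c))" using F2 D0 by (intro mult_left_mono) auto
    then show ?thesis using main by (simp add: algebra_simps)
  qed
  then have "F \<le> 2 * (a * real k * (1 + f)) / \<Delta>" using D0 by (simp add: le_divide_eq mult.commute)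
  then have Fy: "f^2 \<le> (2 * a * real k / \<Delta>) * (1 + f)" using ff by (simp add: algebra_simps)
  have y0: "2 * a * real k / \<Delta> \<ge> 0" using a0 D0 by simp
  have f0: "f \<ge> 0" unfolding f_def using F0 by simp
  have "f \<le> 2 * a * real k / \<Delta> + sqrt (2 * a * real k / \<Delta>)"
    by (rule final_alg[OF f0 y0 Fy])
  moreover have "frob_norm (Wopt - outer v) = f"
    unfolding f_def F_def frob_norm_def by (simp add: outer_nth)
  ultimately show ?thesis by (simp add: \<Delta>_def l1_def l2_def)
qed


end
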